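(* There is an absolute constant $c>0$ such that for every $n\ge1$, every $\eta\in[n]=\{1,\dots,n\}$, and every comparison-based search algorithm (deterministic or randomized) which, given a predicted distribution $\hat p$ on $[n]$ and a target key $a\in\{a_1,\dots,a_n\}$ (with $a_1<\dots<a_n$), locates the index of $a$ using comparisons, there exists an instance $(p,\hat p)$ of distributions on $[n]$ with $H(p)=0$ and earth mover's distance between $p$ and $\hat p$ at most $\eta$ on which the algorithm's expected number of comparisons (over $a=a_i$ with probability $p_i$ and over its internal randomness) is at least $c\log\eta$.
   Context: All logarithms are base 2. $H(p)=-\sum_i p_i\log p_i$ is the entropy. The earth mover's distance between distributions $P,Q$ on $[n]$ is $\inf_{\gamma\in\Pi(P,Q)}\mathbb{E}_{(x,y)\sim\gamma}|x-y|$, with $\Pi(P,Q)$ the set of couplings of $P$ and $Q$. A comparison of the target $a$ with a key $a_j$ returns whether $a<a_j$, $a=a_j$ or $a>a_j$ and counts as one query. *)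

theory Defs
  imports "HOL-Probability.Probability"
begin

text \<open>A node Node j l e g compares the target a with the
  key a_j and continues in l if a < a_j, in e if a = a_j, in g if a > a_j. Since a_1 < ... < a_n, comparing a = a_i
  with a_j amounts to comparing i with j.\<close>
datatype ctree = Leaf nat | Node nat ctree ctree ctree

fun run :: "ctree \<Rightarrow> nat \<Rightarrow> nat" where
  "run (Leaf k) i = k"
| "run (Node j l e g) i = (if i < j then run l i else if i = j then run e i else run g i)"

fun cost :: "ctree \<Rightarrow> nat \<Rightarrow> nat" where
  "cost (Leaf k) i = 0"
| "cost (Node j l e g) i = 1 + (if i < j then cost l i else if i = j then cost e i else cost g i)"

fun tkeys :: "ctree \<Rightarrow> nat set" where
  "tkeys (Leaf k) = {}"
| "tkeys (Node j l e g) = insert j (tkeys l \<union> tkeys e \<union> tkeys g)"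

definition correct_tree :: "nat \<Rightarrow> ctree \<Rightarrow> bool" where
  "correct_tree n T \<longleftrightarrow> tkeys T \<subseteq> {1..n} \<and> (\<forall>i\<in>{1..n}. run T i = i)"

definition dist_on :: "nat \<Rightarrow> nat pmf \<Rightarrow> bool" where
  "dist_on n p \<longleftrightarrow> set_pmf p \<subseteq> {1..n}"

definition entropy :: "nat \<Rightarrow> nat pmf \<Rightarrow> real" where
  "entropy n p = - (\<Sum>i\<in>{1..n}. (if pmf p i = 0 then 0 else pmf p i * log 2 (pmf p i)))"

definition couplings :: "nat pmf \<Rightarrow> nat pmf \<Rightarrow> (nat \<times> nat) pmf set" where
  "couplings P Q = {\<gamma>. map_pmf fst \<gamma> = P \<and> map_pmf snd \<gamma> = Q}"

definition emd :: "nat pmf \<Rightarrow> nat pmf \<Rightarrow> real" where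
  "emd P Q = (INF \<gamma>\<in>couplings P Q. measure_pmf.expectation \<gamma> (\<lambda>(x, y). \<bar>real x - real y\<bar>))"

text \<open>Expected number of comparisons of a randomized algorithm (a distribution over
  deterministic comparison trees, chosen depending on the prediction) when the target
  is a_i with i drawn from p.\<close>
definition exp_cost :: "ctree pmf \<Rightarrow> nat pmf \<Rightarrow> ennreal" where
  "exp_cost R p = (\<integral>\<^sup>+ i. (\<integral>\<^sup>+ T. ennreal (real (cost T i)) \<partial>measure_pmf R) \<partial>measure_pmf p)"

end

theory Submission
  imports Defs
begin

lemma count_lemma:
  "finite (run T ` {i. cost T i \<le> k}) \<and> card (run T ` {i. cost T i \<le> k}) \<le> 3^k"
proof (induction T arbitrary: k)
  case (Leaf x)
  have s: "run (Leaf x) ` {i. cost (Leaf x) i \<le> k} \<subseteq> {x}" by auto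
  have f: "finite (run (Leaf x) ` {i. cost (Leaf x) i \<le> k})" by (rule finite_subset[OF s]) simp
  have "card (run (Leaf x) ` {i. cost (Leaf x) i \<le> k}) \<le> card {x}" by (rule card_mono) (simp, rule s)
  also have "\<dots> \<le> 3^k" by simp
  finally show ?case using f by simp
next
  case (Node j l e g)
  show ?case
  proof (cases k)
    case 0
    then have "{i. cost (Node j l e g) i \<le> k} = {}" by auto
    then show ?thesis by simp
  next
    case (Suc k')
    let ?L = "run l ` {i. cost l i \<le> k'}"
    let ?E = "run e ` {i. cost e i \<le> k'}"
    let ?G = "run g ` {i. cost g i \<le> k'}"
    have sub: "run (Node j l e g) ` {i. cost (Node j l e g) i \<le> k} \<subseteq> ?L \<union> ?E \<union> ?G"
      using Suc by (auto split: if_splits)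
    have IL: "finite ?L" "card ?L \<le> 3^k'" using Node.IH(1) by auto
    have IE: "finite ?E" "card ?E \<le> 3^k'" using Node.IH(2) by auto
    have IG: "finite ?G" "card ?G \<le> 3^k'" using Node.IH(3) by auto
    have f: "finite (?L \<union> ?E \<union> ?G)" using IL IE IG by simp
    have c1: "card (?L \<union> ?E \<union> ?G) \<le> card (?L \<union> ?E) + card ?G" by (rule card_Un_le)
    have c2: "card (?L \<union> ?E) \<le> card ?L + card ?E" by (rule card_Un_le)
    have "card (?L \<union> ?E \<union> ?G) \<le> 3^k" using c1 c2 IL IE IG Suc by simp
    moreover have "card (run (Node j l e g) ` {i. cost (Node j l e g) i \<le> k}) \<le> card (?L \<union> ?E \<union> ?G)"
      by (rule card_mono[OF f sub])
    moreover have "finite (run (Node j l e g) ` {i. cost (Node j l e g) i \<le> k})"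
      by (rule finite_subset[OF sub f])
    ultimately show ?thesis by simp
  qed
qed

lemma sum_lemma:
  assumes "correct_tree n T" "\<eta> \<le> n"
  shows "(\<eta> - 3^k) * (k+1) \<le> (\<Sum>i\<in>{1..\<eta>}. cost T i)"
proof -
  define W where "W = {1..\<eta>}"
  define S where "S = {i\<in>W. cost T i \<le> k}"
  have runid: "\<And>i. i \<in> W \<Longrightarrow> run T i = i" using assms unfolding correct_tree_def W_def by auto
  have "S = run T ` S" using runid unfolding S_def by (auto simp: image_iff)
  also have "\<dots> \<subseteq> run T ` {i. cost T i \<le> k}" unfolding S_def by auto
  finally have "card S \<le> 3^k" using count_lemma[of T k] card_mono order_trans by metis
  have SW: "S \<subseteq> W" "finite W" unfolding S_def W_def by auto
  have cd: "card (W - S) = \<eta> - card S" using SW by (simp add: card_Diff_subset finite_subset W_def)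
  have "\<eta> - 3^k \<le> card (W - S)" using cd \<open>card S \<le> 3^k\<close> by simp
  then have "(\<eta> - 3^k) * (k+1) \<le> card (W - S) * (k+1)" by (rule mult_le_mono1)
  also have "\<dots> = (\<Sum>i\<in>W - S. k+1)" by simp
  also have "\<dots> \<le> (\<Sum>i\<in>W - S. cost T i)" by (rule sum_mono) (auto simp: S_def)
  also have "\<dots> \<le> (\<Sum>i\<in>W. cost T i)" using SW by (intro sum_mono2) auto
  finally show ?thesis unfolding W_def .
qed

lemma numeric_lemma:
  assumes "\<eta> \<ge> (1::nat)"
  shows "\<exists>k. real \<eta> * log 2 (real \<eta>) / 8 \<le> real ((\<eta> - 3^k) * (k+1))"
proof (cases "\<eta> \<ge> 4")
  case True
  define L where "L = log 2 (real \<eta>)"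
  have L2: "L \<ge> 2" unfolding L_def using True by (simp add: le_log_iff)
  have etaL: "2 powr L = real \<eta>" unfolding L_def using assms by simp
  define k where "k = nat \<lfloor>L/4\<rfloor>"
  have k1: "real k \<le> L/4" unfolding k_def using L2 by linarith
  have k2: "real k + 1 \<ge> L/4" unfolding k_def using L2 by linarith
  have "(3::real)^k \<le> 4^k" by (simp add: power_mono)
  also have "(4::real)^k = 2 powr (2 * real k)"
    by (simp add: powr_realpow[symmetric] power_mult[symmetric] powr_powr[symmetric]) 
  also have "\<dots> \<le> 2 powr (L - 1)" using k1 L2 by (intro powr_mono) auto
  also have "\<dots> = real \<eta> / 2" using etaL by (simp add: powr_diff)
  finally have p: "(3::real)^k \<le> real \<eta> / 2" .
  then have r3: "(3::real)^k \<le> real \<eta>" by linarith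
  then have "3^k \<le> \<eta>" by (metis of_nat_le_iff of_nat_numeral of_nat_power)
  then have "real (\<eta> - 3^k) = real \<eta> - 3^k" by (simp add: of_nat_diff)
  then have "real ((\<eta> - 3^k) * (k+1)) = (real \<eta> - 3^k) * (real k + 1)"
    unfolding of_nat_mult by simp
  moreover have "(real \<eta> - 3^k) * (real k + 1) \<ge> (real \<eta> / 2) * (L/4)"
    using p k2 L2 r3 by (intro mult_mono) linarith+
  moreover have "(real \<eta>/2)*(L/4) = real \<eta> * L / 8" by simp
  ultimately have "real \<eta> * L / 8 \<le> real ((\<eta> - 3^k) * (k+1))" by linarith
  then show ?thesis unfolding L_def by (intro exI[of _ k])
next
  case False
  then have "\<eta> = 1 \<or> \<eta> = 2 \<or> \<eta> = 3" using assms by auto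
  moreover have "log 2 (3::real) \<le> 2"
  proof -
    have "log 2 (3::real) \<le> log 2 4" by simp
    also have "log 2 (4::real) = 2"
      by (metis log2_of_power_eq numeral_Bit0 numeral_One power2_eq_square power_one_right
          mult_2 of_nat_numeral)
    finally show ?thesis .
  qed
  then have l3: "real 3 * log 2 (real 3) / 8 \<le> real ((3 - 3^0) * (0+1))" by simp
  have l2: "real 2 * log 2 (real 2) / 8 \<le> real ((2 - 3^0) * (0+1))" by simp
  have l1: "real 1 * log 2 (real 1) / 8 \<le> real ((1 - 3^0) * (0+1))" by simp
  from \<open>\<eta> = 1 \<or> \<eta> = 2 \<or> \<eta> = 3\<close> show ?thesis
  proof (elim disjE)
    assume e: "\<eta> = 1" show ?thesis unfolding e by (rule exI[of _ 0], rule l1)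
  next
    assume e: "\<eta> = 2" show ?thesis unfolding e by (rule exI[of _ 0], rule l2)
  next
    assume e: "\<eta> = 3" show ?thesis unfolding e by (rule exI[of _ 0], rule l3)
  qed
qed

theorem theorem3p2:
  "\<exists>c::real. c > 0 \<and>
    (\<forall>n::nat. n \<ge> 1 \<longrightarrow>
     (\<forall>\<eta>::nat. \<eta> \<in> {1..n} \<longrightarrow>
      (\<forall>A :: nat pmf \<Rightarrow> ctree pmf.
         (\<forall>q. dist_on n q \<longrightarrow> (\<forall>T\<in>set_pmf (A q). correct_tree n T)) \<longrightarrow>
         (\<exists>p q. dist_on n p \<and> dist_on n q \<and> entropy n p = 0 \<and>
                emd p q \<le> real \<eta> \<and>
                exp_cost (A q) p \<ge> ennreal (c * log 2 (real \<eta>))))))"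
proof (intro exI[of _ "1/8"] conjI allI impI)
  fix n \<eta> :: nat and A :: "nat pmf \<Rightarrow> ctree pmf"
  assume n: "n \<ge> 1" and eta: "\<eta> \<in> {1..n}"
    and hA: "\<forall>q. dist_on n q \<longrightarrow> (\<forall>T\<in>set_pmf (A q). correct_tree n T)"
  define q where "q = return_pmf (1::nat)"
  have dq: "dist_on n q" unfolding q_def dist_on_def using n by auto
  define R where "R = A q"
  have corr: "\<And>T. T \<in> set_pmf R \<Longrightarrow> correct_tree n T" using hA dq R_def by auto
  define B where "B = 1/8 * log 2 (real \<eta>)"
  have B0: "B \<ge> 0" unfolding B_def using eta by auto
  define W where "W = {1..\<eta>}"
  have Wne: "W \<noteq> {}" "finite W" using eta unfolding W_def by auto
  have cW: "card W = \<eta>" unfolding W_def by simp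
  define f where "f i = (\<integral>\<^sup>+ T. ennreal (real (cost T i)) \<partial>measure_pmf R)" for i
  define M where "M = Max (f ` W)"
  have "M \<in> f ` W" unfolding M_def using Wne by (intro Max_in) auto
  then obtain i0 where i0: "i0 \<in> W" "f i0 = M" by auto
  obtain k where k: "real \<eta> * log 2 (real \<eta>) / 8 \<le> real ((\<eta> - 3^k) * (k+1))"
    using numeric_lemma[of \<eta>] eta by auto
  have bnd: "ennreal (real \<eta> * B) \<le> of_nat (\<Sum>i\<in>W. cost T i)" if "T \<in> set_pmf R" for T
  proof -
    have "(\<eta> - 3^k) * (k+1) \<le> (\<Sum>i\<in>W. cost T i)"
      using sum_lemma[OF corr[OF that], of \<eta> k] eta unfolding W_def by auto
    then have "real ((\<eta> - 3^k) * (k+1)) \<le> real (\<Sum>i\<in>W. cost T i)" by (simp only: of_nat_le_iff)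
    then have "real \<eta> * B \<le> real (\<Sum>i\<in>W. cost T i)" using k unfolding B_def by linarith
    then show ?thesis by (simp add: ennreal_of_nat_eq_real_of_nat ennreal_leI)
  qed
  have "ennreal (real \<eta> * B) = (\<integral>\<^sup>+ T. ennreal (real \<eta> * B) \<partial>measure_pmf R)"
    by (simp add: measure_pmf.emeasure_space_1)
  also have "\<dots> \<le> (\<integral>\<^sup>+ T. of_nat (\<Sum>i\<in>W. cost T i) \<partial>measure_pmf R)"
    using bnd by (intro nn_integral_mono_AE) (simp add: AE_measure_pmf_iff)
  also have "\<dots> = (\<integral>\<^sup>+ T. (\<Sum>i\<in>W. ennreal (real (cost T i))) \<partial>measure_pmf R)"
    by (simp add: ennreal_of_nat_eq_real_of_nat[symmetric])
  also have "\<dots> = (\<Sum>i\<in>W. f i)" unfolding f_def by (rule nn_integral_sum) simp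
  also have "\<dots> \<le> of_nat (card W) * M" unfolding M_def using Wne
    by (intro sum_bounded_above) auto
  finally have "of_nat \<eta> * ennreal B \<le> of_nat \<eta> * M"
    using cW B0 by (simp add: ennreal_mult ennreal_of_nat_eq_real_of_nat)
  then have BM: "ennreal B \<le> M" using eta
    by (subst (asm) ennreal_mult_le_mult_iff) auto
  define p where "p = return_pmf i0"
  have dp: "dist_on n p" unfolding p_def dist_on_def using i0 eta unfolding W_def by auto
  have ent: "entropy n p = 0" unfolding entropy_def p_def
    by (auto simp: pmf_return indicator_def intro!: sum.neutral)
  have "return_pmf (i0, 1::nat) \<in> couplings p q" unfolding couplings_def p_def q_def by simp
  then have "emd p q \<le> measure_pmf.expectation (return_pmf (i0, 1::nat)) (\<lambda>(x, y). \<bar>real x - real y\<bar>)"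
    unfolding emd_def
    by (intro cINF_lower bdd_belowI[of _ 0]) (auto intro!: Bochner_Integration.integral_nonneg)
  also have "\<dots> \<le> real \<eta>" using i0 unfolding W_def by simp
  finally have em: "emd p q \<le> real \<eta>" .
  have "exp_cost (A q) p = f i0" unfolding exp_cost_def p_def f_def R_def
    by (simp add: nn_integral_return_pmf)
  then have ec: "exp_cost (A q) p \<ge> ennreal (1/8 * log 2 (real \<eta>))" using BM i0 unfolding B_def by simp
  have X: "dist_on n p \<and> dist_on n q \<and> entropy n p = 0 \<and>
                emd p q \<le> real \<eta> \<and> exp_cost (A q) p \<ge> ennreal (1/8 * log 2 (real \<eta>))"
    using dp dq ent em ec by (intro conjI)
  show "\<exists>p q. dist_on n p \<and> dist_on n q \<and> entropy n p = 0 \<and>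
                emd p q \<le> real \<eta> \<and> exp_cost (A q) p \<ge> ennreal (1/8 * log 2 (real \<eta>))"
    by (rule exI[where x=p], rule exI[where x=q], rule X)
qed (simp)

end
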